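(* Let $H=H_1\times R$ be a connected non-trivial core such that $H_1$ is truly projective and $R\not\cong K_1^*$, and let $w\in V(R)$. Then there exist a graph $F$ and vertices $u^*,v^*\in V(F)$ such that: (a) for every edge $xy\in E(H_1)$ there is a homomorphism $f\colon F\to H$ with $f(u^* )=(x,w)$ and $f(v^* )=(y,w)$; (b) for every homomorphism $f\colon F\to H$, writing $f_1=\pi_1\circ f$ for the first coordinate of $f$ (with values in $V(H_1)$), we have $f_1(u^* )f_1(v^* )\in E(H_1)$.
   Context: Graphs are finite, undirected, without parallel edges, loops allowed; $K_1^*$ is the one-vertex graph with a loop. A homomorphism is an edge-preserving vertex map. A core is a graph with no homomorphism to a proper subgraph of itself; it is trivial if isomorphic to $K_1$, $K_1^*$ or $K_2$, non-trivial otherwise. Graphs $G,H$ are incomparable if there is no homomorphism $G\to H$ and none $H\to G$. The direct product $H_1\times H_2$ has vertex set $V(H_1)\times V(H_2)$ with $(x_1,y_1)(x_2,y_2)$ an edge iff $x_1x_2\in E(H_1)$ and $y_1y_2\in E(H_2)$; $H^m$ is the $m$-fold product and $\pi_i$ the $i$-th coordinate projection. $H$ is truly projective if it has at least three vertices and for every $s\ge2$ and every connected core $W$ incomparable with $H$, every homomorphism $f\colon H^s\times W\to H$ satisfying $f(x,\dots,x,y)=x$ for all $x\in V(H)$, $y\in V(W)$ equals $\pi_i$ for some $i\in[s]$. *)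

theory Defs
  imports Main
begin

text \<open>Finite undirected graphs with loops allowed: a vertex set and a symmetric
  edge relation (ordered pairs, both orientations present).\<close>

record 'a graph =
  verts :: "'a set"
  arcs  :: "('a \<times> 'a) set"

definition graph :: "('a, 'm) graph_scheme \<Rightarrow> bool" where
  "graph G \<longleftrightarrow> finite (verts G) \<and> arcs G \<subseteq> verts G \<times> verts G \<and> sym (arcs G)"

definition hom :: "('a, 'm) graph_scheme \<Rightarrow> ('b, 'n) graph_scheme \<Rightarrow> ('a \<Rightarrow> 'b) \<Rightarrow> bool" where
  "hom G H f \<longleftrightarrow> (\<forall>x\<in>verts G. f x \<in> verts H) \<and>
                   (\<forall>x y. (x, y) \<in> arcs G \<longrightarrow> (f x, f y) \<in> arcs H)"

definition subgraph :: "'a graph \<Rightarrow> 'a graph \<Rightarrow> bool" where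
  "subgraph G' G \<longleftrightarrow> graph G' \<and> verts G' \<subseteq> verts G \<and> arcs G' \<subseteq> arcs G"

definition core :: "'a graph \<Rightarrow> bool" where
  "core G \<longleftrightarrow> graph G \<and> \<not> (\<exists>G' f. subgraph G' G \<and> G' \<noteq> G \<and> hom G G' f)"

definition iso :: "'a graph \<Rightarrow> 'b graph \<Rightarrow> bool" where
  "iso G H \<longleftrightarrow> (\<exists>f. bij_betw f (verts G) (verts H) \<and>
     (\<forall>x\<in>verts G. \<forall>y\<in>verts G. (x, y) \<in> arcs G \<longleftrightarrow> (f x, f y) \<in> arcs H))"

definition K1 :: "unit graph" where "K1 = \<lparr>verts = {()}, arcs = {}\<rparr>"
definition K1star :: "unit graph" where "K1star = \<lparr>verts = {()}, arcs = {((), ())}\<rparr>"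
definition K2 :: "bool graph" where "K2 = \<lparr>verts = UNIV, arcs = {(True, False), (False, True)}\<rparr>"

definition trivial_graph :: "'a graph \<Rightarrow> bool" where
  "trivial_graph G \<longleftrightarrow> iso G K1 \<or> iso G K1star \<or> iso G K2"

definition connected_graph :: "'a graph \<Rightarrow> bool" where
  "connected_graph G \<longleftrightarrow> verts G \<noteq> {} \<and> (\<forall>x\<in>verts G. \<forall>y\<in>verts G. (x, y) \<in> (arcs G)\<^sup>*)"

definition incomparable :: "'a graph \<Rightarrow> 'b graph \<Rightarrow> bool" where
  "incomparable G H \<longleftrightarrow> \<not> (\<exists>f. hom G H f) \<and> \<not> (\<exists>f. hom H G f)"

definition dprod :: "'a graph \<Rightarrow> 'b graph \<Rightarrow> ('a \<times> 'b) graph" where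
  "dprod G H = \<lparr>verts = verts G \<times> verts H,
     arcs = {((x1, y1), (x2, y2)). (x1, x2) \<in> arcs G \<and> (y1, y2) \<in> arcs H}\<rparr>"

definition gpow :: "'a graph \<Rightarrow> nat \<Rightarrow> 'a list graph" where
  "gpow H m = \<lparr>verts = {xs. length xs = m \<and> set xs \<subseteq> verts H},
     arcs = {(xs, ys). length xs = m \<and> length ys = m \<and> (\<forall>i<m. (xs ! i, ys ! i) \<in> arcs H)}\<rparr>"

text \<open>Truly projective. The connected cores W range over graphs on nat
  (every finite graph is isomorphic to one).\<close>
definition truly_projective :: "'a graph \<Rightarrow> bool" where
  "truly_projective H \<longleftrightarrow> card (verts H) \<ge> 3 \<and>
    (\<forall>s\<ge>2. \<forall>W :: nat graph. connected_graph W \<and> core W \<and> incomparable W H \<longrightarrow>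
      (\<forall>f. hom (dprod (gpow H s) W) H f \<and>
           (\<forall>x\<in>verts H. \<forall>y\<in>verts W. f (replicate s x, y) = x) \<longrightarrow>
           (\<exists>i<s. \<forall>v\<in>verts (dprod (gpow H s) W). f v = fst v ! i)))"

end

theory Submission
  imports Defs
begin

lemma graph_arcsD: "graph G \<Longrightarrow> (x,y) \<in> arcs G \<Longrightarrow> x \<in> verts G \<and> y \<in> verts G"
  unfolding graph_def by blast

lemma graph_symD: "graph G \<Longrightarrow> (x,y) \<in> arcs G \<Longrightarrow> (y,x) \<in> arcs G"
  unfolding graph_def by (meson symD)

lemma core_proper_False:
  assumes "core G" "S \<subseteq> verts G" "S \<noteq> verts G" "\<forall>x\<in>verts G. f x \<in> S"
    "\<forall>x y. (x,y)\<in>arcs G \<longrightarrow> (f x, f y) \<in> arcs G"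
  shows False
proof -
  have g: "graph G" using assms(1) unfolding core_def by blast
  define G' where "G' = \<lparr>verts = S, arcs = arcs G \<inter> (S \<times> S)\<rparr>"
  have "graph G'" using g assms(2) unfolding G'_def graph_def
    by (auto intro: finite_subset simp: sym_def)
  moreover have "verts G' \<subseteq> verts G" "arcs G' \<subseteq> arcs G" using assms(2) by (auto simp: G'_def)
  ultimately have sub: "subgraph G' G" unfolding subgraph_def by blast
  have ne: "G' \<noteq> G" proof
    assume "G' = G" hence "verts G' = verts G" by simp
    thus False using assms(3) by (simp add: G'_def)
  qed
  have "hom G G' f" unfolding hom_def G'_def using assms(4,5) graph_arcsD[OF g] by auto
  thus False using assms(1) sub ne unfolding core_def by blast
qed

lemma core_surj:
  assumes "core G" "\<forall>x\<in>verts G. f x \<in> verts G"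
    "\<forall>x y. (x,y)\<in>arcs G \<longrightarrow> (f x, f y) \<in> arcs G"
  shows "f ` verts G = verts G"
  using core_proper_False[OF assms(1), of "f ` verts G" f] assms by blast

lemma core_arcs_onto:
  assumes "core G" "\<forall>x\<in>verts G. f x \<in> verts G"
    "\<forall>x y. (x,y)\<in>arcs G \<longrightarrow> (f x, f y) \<in> arcs G"
  shows "(\<lambda>(x,y). (f x, f y)) ` arcs G = arcs G"
proof -
  have g: "graph G" using assms(1) unfolding core_def by blast
  define G' where "G' = \<lparr>verts = verts G, arcs = (\<lambda>(x,y). (f x, f y)) ` arcs G\<rparr>"
  have "graph G'" using g assms(2) unfolding G'_def graph_def
    by (auto simp: sym_def)
  moreover have "verts G' \<subseteq> verts G" "arcs G' \<subseteq> arcs G" using assms(3) by (auto simp: G'_def)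
  ultimately have sub: "subgraph G' G" unfolding subgraph_def by blast
  have "hom G G' f" unfolding hom_def G'_def using assms(2) by auto
  hence "G' = G" using assms(1) sub unfolding core_def by blast
  thus ?thesis unfolding G'_def by (metis graph.select_convs(2))
qed

lemma encode:
  assumes "graph G"
  shows "\<exists>(G'::nat graph) h. graph G' \<and> bij_betw h (verts G') (verts G) \<and>
     (\<forall>a b. (a,b)\<in>arcs G' \<longleftrightarrow> a\<in>verts G' \<and> b\<in>verts G' \<and> (h a, h b)\<in>arcs G)"
proof -
  have fin: "finite (verts G)" using assms unfolding graph_def by blast
  obtain h where h: "bij_betw h {0..<card (verts G)} (verts G)"
    using ex_bij_betw_nat_finite[OF fin] by blast
  define G' where "G' = \<lparr>verts = {0..<card (verts G)},
     arcs = {(a,b). a \<in> {0..<card (verts G)} \<and> b \<in> {0..<card (verts G)} \<and> (h a, h b) \<in> arcs G}\<rparr>"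
  have "graph G'" unfolding G'_def graph_def using graph_symD[OF assms]
    by (auto simp: sym_def)
  moreover have "bij_betw h (verts G') (verts G)" using h by (simp add: G'_def)
  ultimately show ?thesis by (rule_tac x=G' in exI, rule_tac x=h in exI) (auto simp: G'_def)
qed

lemma verts_dprod[simp]: "verts (dprod G K) = verts G \<times> verts K"
  by (simp add: dprod_def)
lemma arcs_dprod[simp]: "((a,b),(c,d)) \<in> arcs (dprod G K) \<longleftrightarrow> (a,c) \<in> arcs G \<and> (b,d) \<in> arcs K"
  by (simp add: dprod_def)
lemma verts_gpow[simp]: "xs \<in> verts (gpow G m) \<longleftrightarrow> length xs = m \<and> set xs \<subseteq> verts G"
  by (simp add: gpow_def)
lemma arcs_gpow[simp]: "(xs, ys) \<in> arcs (gpow G m) \<longleftrightarrow> length xs = m \<and> length ys = m \<and> (\<forall>i<m. (xs ! i, ys ! i) \<in> arcs G)"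
  by (simp add: gpow_def)

lemma graph_dprod: "graph G \<Longrightarrow> graph K \<Longrightarrow> graph (dprod G K)"
  unfolding graph_def dprod_def sym_def by auto

locale L17 =
  fixes H1 :: "'a graph" and R :: "'b graph" and w :: 'b
  assumes gH1: "graph H1" and gR: "graph R"
    and conn: "connected_graph (dprod H1 R)" and cH: "core (dprod H1 R)"
    and tp: "truly_projective H1"
    and niso: "\<not> iso R K1star"
    and wR: "w \<in> verts R"
begin

abbreviation "H \<equiv> dprod H1 R"

lemma gH: "graph H" using graph_dprod[OF gH1 gR] .

lemma finV1: "finite (verts H1)" using gH1 graph_def by blast
lemma finVR: "finite (verts R)" using gR graph_def by blast
lemma card3: "card (verts H1) \<ge> 3" using tp truly_projective_def by blast

lemma R_loopless: "(r, r) \<notin> arcs R"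
proof
  assume rr: "(r, r) \<in> arcs R"
  have rV: "r \<in> verts R" using graph_arcsD[OF gR rr] by blast
  show False
  proof (cases "verts R = {r}")
    case True
    have "iso R K1star" unfolding iso_def K1star_def
      apply (rule exI[of _ "\<lambda>_. ()"])
      using True rr by (auto simp: bij_betw_def inj_on_def)
    thus False using niso by blast
  next
    case False
    then obtain r' where r': "r' \<in> verts R" "r' \<noteq> r" using rV by blast
    obtain x where x: "x \<in> verts H1" using card3 by fastforce
    show False
      apply (rule core_proper_False[OF cH, of "verts H1 \<times> {r}" "\<lambda>(y,s). (y, r)"])
      using rV x r' rr by auto
  qed
qed

end

context L17 begin

lemma two_verts: obtains x x' where "x \<in> verts H1" "x' \<in> verts H1" "x \<noteq> x'"
proof -
  have "\<not> (\<forall>x\<in>verts H1. \<forall>x'\<in>verts H1. x = x')"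
  proof
    assume "\<forall>x\<in>verts H1. \<forall>x'\<in>verts H1. x = x'"
    hence "card (verts H1) \<le> 1" using card_le_Suc0_iff_eq[OF finV1] by simp
    thus False using card3 by simp
  qed
  thus ?thesis using that by blast
qed

lemma w_nbr: "\<exists>w'. (w, w') \<in> arcs R" and E1_ne: "arcs H1 \<noteq> {}"
proof -
  obtain x x' where x: "x \<in> verts H1" "x' \<in> verts H1" "x \<noteq> x'" using two_verts by blast
  have "((x,w),(x',w)) \<in> (arcs H)\<^sup>*" using conn x wR unfolding connected_graph_def by simp
  then obtain c where "((x,w), c) \<in> arcs H"
  proof (cases rule: converse_rtranclE)
    case base thus ?thesis using x(3) by simp
  next
    case (step c) thus ?thesis using that by blast
  qed
  then obtain c1 c2 where "(x,c1) \<in> arcs H1" "(w,c2) \<in> arcs R" by (cases c) auto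
  thus "\<exists>w'. (w, w') \<in> arcs R" "arcs H1 \<noteq> {}" by auto
qed

lemma snd_rtrancl: "(p, q) \<in> (arcs H)\<^sup>* \<Longrightarrow> (snd p, snd q) \<in> (arcs R)\<^sup>*"
proof (induction rule: rtrancl_induct)
  case base thus ?case by simp
next
  case (step y z)
  hence "(snd y, snd z) \<in> arcs R" by (cases y, cases z) simp
  thus ?case using step.IH by (meson rtrancl.rtrancl_into_rtrancl)
qed

lemma R_conn: "a \<in> verts R \<Longrightarrow> b \<in> verts R \<Longrightarrow> (a, b) \<in> (arcs R)\<^sup>*"
proof -
  assume ab: "a \<in> verts R" "b \<in> verts R"
  obtain x where x: "x \<in> verts H1" using two_verts by blast
  have "((x,a),(x,b)) \<in> (arcs H)\<^sup>*" using conn x ab unfolding connected_graph_def by simp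
  from snd_rtrancl[OF this] show ?thesis by simp
qed

lemma fold_H1:
  assumes a: "a \<in> verts H1" and b: "b \<in> verts H1" and N: "\<forall>z. (a,z) \<in> arcs H1 \<longleftrightarrow> (b,z) \<in> arcs H1"
  shows "a = b"
proof (rule ccontr)
  assume ab: "a \<noteq> b"
  define \<phi> where "\<phi> x = (if x = a then b else x)" for x
  have s: "\<And>u v. (u,v) \<in> arcs H1 \<Longrightarrow> (v,u) \<in> arcs H1" using graph_symD[OF gH1] by blast
  have hom\<phi>: "(\<phi> x, \<phi> y) \<in> arcs H1" if xy: "(x,y) \<in> arcs H1" for x y
  proof (cases "x = a")
    case True
    hence bx: "(b, y) \<in> arcs H1" using N xy by simp
    show ?thesis
    proof (cases "y = a")
      case True
      have "(b, a) \<in> arcs H1" using bx True by simp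
      hence "(a, b) \<in> arcs H1" using s by blast
      hence "(b, b) \<in> arcs H1" using N by simp
      thus ?thesis using True \<open>x = a\<close> by (simp add: \<phi>_def)
    next
      case False thus ?thesis using bx True by (simp add: \<phi>_def)
    qed
  next
    case False
    show ?thesis
    proof (cases "y = a")
      case True
      have "(a, x) \<in> arcs H1" using s xy True by simp
      hence "(b, x) \<in> arcs H1" using N by simp
      hence "(x, b) \<in> arcs H1" using s by blast
      thus ?thesis using True False by (simp add: \<phi>_def)
    next
      case False2: False thus ?thesis using xy False by (simp add: \<phi>_def)
    qed
  qed
  have 1: "(verts H1 - {a}) \<times> verts R \<subseteq> verts H" by auto
  have 2: "(verts H1 - {a}) \<times> verts R \<noteq> verts H" using a wR by auto
  have 3: "\<forall>x\<in>verts H. (\<lambda>(y,s). (\<phi> y, s)) x \<in> (verts H1 - {a}) \<times> verts R"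
    using b ab by (auto simp: \<phi>_def)
  have 4: "\<forall>x y. (x,y)\<in>arcs H \<longrightarrow> ((\<lambda>(y,s). (\<phi> y, s)) x, (\<lambda>(y,s). (\<phi> y, s)) y) \<in> arcs H"
    using hom\<phi> by auto
  show False using core_proper_False[OF cH 1 2 3 4] .
qed

lemma card_H: "card (verts H) = card (verts H1) * card (verts R)" by (simp add: card_cartesian_product)

lemma no_RH1: "\<not> hom R H1 \<psi>"
proof
  assume h: "hom R H1 \<psi>"
  define S where "S = (\<lambda>r. (\<psi> r, r)) ` verts R"
  have "card S \<le> card (verts R)" unfolding S_def using card_image_le finVR by blast
  moreover have "card (verts R) > 0" using wR finVR card_gt_0_iff by blast
  moreover have "card (verts R) < 3 * card (verts R)" using \<open>card (verts R) > 0\<close> by simp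
  moreover have "3 * card (verts R) \<le> card (verts H1) * card (verts R)" using card3 by simp
  ultimately have "card S < card (verts H)" unfolding card_H by linarith
  hence 2: "S \<noteq> verts H" by auto
  have 1: "S \<subseteq> verts H" using h unfolding S_def hom_def by auto
  have 3: "\<forall>x\<in>verts H. (\<lambda>(y,s). (\<psi> s, s)) x \<in> S" unfolding S_def by auto
  have 4: "\<forall>x y. (x,y)\<in>arcs H \<longrightarrow> ((\<lambda>(y,s). (\<psi> s, s)) x, (\<lambda>(y,s). (\<psi> s, s)) y) \<in> arcs H"
    using h unfolding hom_def by auto
  show False using core_proper_False[OF cH 1 2 3 4] .
qed

lemma card_R2: "card (verts R) \<ge> 2"
proof -
  obtain w' where ww: "(w,w') \<in> arcs R" using w_nbr by blast
  have "w \<noteq> w'" using R_loopless ww by blast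
  moreover have "w' \<in> verts R" using graph_arcsD[OF gR ww] by blast
  ultimately have "{w, w'} \<subseteq> verts R" "card {w,w'} = 2" using wR by auto
  thus ?thesis using card_mono finVR by metis
qed

lemma no_H1R: "\<not> hom H1 R \<psi>"
proof
  assume h: "hom H1 R \<psi>"
  define S where "S = (\<lambda>x. (x, \<psi> x)) ` verts H1"
  have "card S \<le> card (verts H1)" unfolding S_def using card_image_le finV1 by blast
  moreover have "card (verts H1) < card (verts H1) * 2" using card3 by simp
  moreover have "card (verts H1) * 2 \<le> card (verts H1) * card (verts R)" using card_R2 by simp
  ultimately have "card S < card (verts H)" unfolding card_H by linarith
  hence 2: "S \<noteq> verts H" by auto
  have 1: "S \<subseteq> verts H" using h unfolding S_def hom_def by auto
  have 3: "\<forall>x\<in>verts H. (\<lambda>(y,s). (y, \<psi> y)) x \<in> S" unfolding S_def by auto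
  have 4: "\<forall>x y. (x,y)\<in>arcs H \<longrightarrow> ((\<lambda>(y,s). (y, \<psi> y)) x, (\<lambda>(y,s). (y, \<psi> y)) y) \<in> arcs H"
    using h unfolding hom_def by auto
  show False using core_proper_False[OF cH 1 2 3 4] .
qed

end

context L17 begin

abbreviation "E2 \<equiv> arcs R O arcs R"

lemma symR: "(a,b) \<in> arcs R \<Longrightarrow> (b,a) \<in> arcs R" using graph_symD[OF gR] .

lemma E2_sym: "(a,b) \<in> E2\<^sup>* \<Longrightarrow> (b,a) \<in> E2\<^sup>*"
proof (induction rule: rtrancl_induct)
  case base thus ?case by simp
next
  case (step y z)
  then obtain m where "(y,m) \<in> arcs R" "(m,z) \<in> arcs R" by blast
  hence "(z,y) \<in> E2" using symR by blast
  thus ?case using step.IH by (meson converse_rtrancl_into_rtrancl)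
qed

lemma odd_swap: "(a,b) \<in> E2\<^sup>* \<Longrightarrow> \<forall>c. (b,c) \<in> arcs R \<longrightarrow> (\<exists>m. (a,m) \<in> arcs R \<and> (m,c) \<in> E2\<^sup>*)"
proof (induction rule: rtrancl_induct)
  case base thus ?case by blast
next
  case (step y z)
  show ?case
  proof (intro allI impI)
    fix c assume zc: "(z,c) \<in> arcs R"
    obtain p where yp: "(y,p) \<in> arcs R" and pz: "(p,z) \<in> arcs R" using step.hyps(2) by blast
    obtain m where am: "(a,m) \<in> arcs R" and mp: "(m,p) \<in> E2\<^sup>*" using step.IH yp by blast
    have "(p,c) \<in> E2" using pz zc by blast
    hence "(m,c) \<in> E2\<^sup>*" using mp by (meson rtrancl.rtrancl_into_rtrancl)
    thus "\<exists>m. (a,m) \<in> arcs R \<and> (m,c) \<in> E2\<^sup>*" using am by blast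
  qed
qed

lemma parity: "(a,r) \<in> (arcs R)\<^sup>* \<Longrightarrow> (a,r) \<in> E2\<^sup>* \<or> (\<exists>p. (a,p) \<in> E2\<^sup>* \<and> (p,r) \<in> arcs R)"
proof (induction rule: rtrancl_induct)
  case base thus ?case by simp
next
  case (step y z)
  from step.IH show ?case
  proof
    assume "(a,y) \<in> E2\<^sup>*" thus ?thesis using step.hyps(2) by blast
  next
    assume "\<exists>p. (a,p) \<in> E2\<^sup>* \<and> (p,y) \<in> arcs R"
    then obtain p where "(a,p) \<in> E2\<^sup>*" "(p,y) \<in> arcs R" by blast
    moreover have "(p,z) \<in> E2" using calculation(2) step.hyps(2) by blast
    ultimately show ?thesis by (meson rtrancl.rtrancl_into_rtrancl)
  qed
qed

lemma nonbip: "\<exists>w'. (w,w') \<in> arcs R \<and> (w,w') \<in> E2\<^sup>*"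
proof (rule ccontr)
  assume nb: "\<not> ?thesis"
  define S where "S = {r. (w,r) \<in> E2\<^sup>*}"
  have alt: "(r1 \<in> S) \<noteq> (r2 \<in> S)" if e: "(r1,r2) \<in> arcs R" for r1 r2
  proof
    assume eq: "(r1 \<in> S) = (r2 \<in> S)"
    show False
    proof (cases "r1 \<in> S")
      case True
      hence w1: "(w,r1) \<in> E2\<^sup>*" "(w,r2) \<in> E2\<^sup>*" using eq by (auto simp: S_def)
      obtain m where wm: "(w,m) \<in> arcs R" and m1: "(m,r1) \<in> E2\<^sup>*"
        using odd_swap[OF w1(2)] symR[OF e] by blast
      have "(r1,w) \<in> E2\<^sup>*" using E2_sym[OF w1(1)] .
      hence "(m,w) \<in> E2\<^sup>*" using m1 by (meson rtrancl_trans)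
      hence "(w,m) \<in> E2\<^sup>*" using E2_sym by blast
      thus False using nb wm by blast
    next
      case False
      hence n2: "r2 \<notin> S" using eq by simp
      have r1V: "r1 \<in> verts R" using graph_arcsD[OF gR e] by blast
      have "(w,r1) \<in> (arcs R)\<^sup>*" using R_conn[OF wR r1V] .
      from parity[OF this] obtain p where "(w,p) \<in> E2\<^sup>*" "(p,r1) \<in> arcs R"
        using False by (auto simp: S_def)
      moreover have "(p,r2) \<in> E2" using calculation(2) e by blast
      ultimately have "r2 \<in> S" unfolding S_def by (meson rtrancl.rtrancl_into_rtrancl mem_Collect_eq)
      thus False using n2 by simp
    qed
  qed
  obtain x y where xy: "(x,y) \<in> arcs H1" using E1_ne by auto
  obtain w' where ww: "(w,w') \<in> arcs R" using w_nbr by blast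
  define p where "p = (x,w)"
  define q where "q = (y,w')"
  have pq: "(p,q) \<in> arcs H" "(q,p) \<in> arcs H" using xy ww graph_symD[OF gH1] symR
    by (auto simp: p_def q_def)
  have pqV: "p \<in> verts H" "q \<in> verts H" using graph_arcsD[OF gH pq(1)] by auto
  have "card {p,q} \<le> 2" by (simp add: card_insert_le_m1)
  moreover have "card (verts H) \<ge> 6"
  proof -
    have "3 * 2 \<le> card (verts H1) * card (verts R)" using card3 card_R2 by (meson mult_le_mono)
    thus ?thesis unfolding card_H by simp
  qed
  ultimately have 2: "{p,q} \<noteq> verts H" by auto
  have 1: "{p,q} \<subseteq> verts H" using pqV by auto
  define f where "f z = (if snd z \<in> S then p else q)" for z :: "'a \<times> 'b"
  have 3: "\<forall>z\<in>verts H. f z \<in> {p,q}" by (simp add: f_def)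
  have 4: "\<forall>a b. (a,b)\<in>arcs H \<longrightarrow> (f a, f b) \<in> arcs H"
  proof (intro allI impI)
    fix a b assume ab: "(a,b) \<in> arcs H"
    hence "(snd a, snd b) \<in> arcs R" by (cases a, cases b) simp
    hence "(snd a \<in> S) \<noteq> (snd b \<in> S)" using alt by blast
    thus "(f a, f b) \<in> arcs H" using pq by (auto simp: f_def)
  qed
  show False using core_proper_False[OF cH 1 2 3 4] .
qed

end

context L17 begin

lemma W_exists: "\<exists>(W::nat graph) h. graph W \<and> bij_betw h (verts W) (verts R) \<and>
     (\<forall>a b. (a,b)\<in>arcs W \<longleftrightarrow> a\<in>verts W \<and> b\<in>verts W \<and> (h a, h b)\<in>arcs R) \<and>
     connected_graph W \<and> core W \<and> incomparable W H1"
proof -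
  obtain W :: "nat graph" and h where gW: "graph W" and bij: "bij_betw h (verts W) (verts R)"
    and arcW: "\<forall>a b. (a,b)\<in>arcs W \<longleftrightarrow> a\<in>verts W \<and> b\<in>verts W \<and> (h a, h b)\<in>arcs R"
    using encode[OF gR] by blast
  define hi where "hi = the_inv_into (verts W) h"
  have inj: "inj_on h (verts W)" and img: "h ` verts W = verts R" using bij unfolding bij_betw_def by auto
  have hi1: "hi r \<in> verts W" "h (hi r) = r" if "r \<in> verts R" for r
    using that inj img unfolding hi_def
    by (auto intro: the_inv_into_into f_the_inv_into_f)
  have hi2: "hi (h a) = a" if "a \<in> verts W" for a
    using that inj unfolding hi_def by (simp add: the_inv_into_f_f)
  have hV: "h a \<in> verts R" if "a \<in> verts W" for a using that img by auto
  have arc_hi: "(hi r, hi s) \<in> arcs W" if "(r,s) \<in> arcs R" for r s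
  proof -
    have "r \<in> verts R" "s \<in> verts R" using graph_arcsD[OF gR that] by auto
    thus ?thesis using arcW hi1 that by auto
  qed
  have conW: "connected_graph W"
    unfolding connected_graph_def
  proof (intro conjI ballI)
    show "verts W \<noteq> {}" using img wR by auto
  next
    fix a b assume a: "a \<in> verts W" and b: "b \<in> verts W"
    have "(h a, h b) \<in> (arcs R)\<^sup>*" using R_conn hV a b by blast
    hence "(hi (h a), hi (h b)) \<in> (arcs W)\<^sup>*"
    proof (induction rule: rtrancl_induct)
      case base thus ?case by simp
    next
      case (step y z)
      thus ?case using arc_hi by (meson rtrancl.rtrancl_into_rtrancl)
    qed
    thus "(a,b) \<in> (arcs W)\<^sup>*" using hi2 a b by simp
  qed
  have incW: "incomparable W H1"
    unfolding incomparable_def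
  proof (intro conjI notI)
    assume "\<exists>f. hom W H1 f"
    then obtain f where f: "hom W H1 f" by blast
    have "hom R H1 (f \<circ> hi)" using f hi1 arc_hi unfolding hom_def by auto
    thus False using no_RH1 by blast
  next
    assume "\<exists>f. hom H1 W f"
    then obtain f where f: "hom H1 W f" by blast
    have "hom H1 R (h \<circ> f)" using f hV arcW unfolding hom_def by auto
    thus False using no_H1R by blast
  qed
  have coreW: "core W"
    unfolding core_def
  proof (intro conjI notI)
    show "graph W" by (fact gW)
  next
    assume "\<exists>W' f. subgraph W' W \<and> W' \<noteq> W \<and> hom W W' f"
    then obtain W' f where sub: "subgraph W' W" and ne: "W' \<noteq> W" and hf: "hom W W' f" by blast
    have gW': "graph W'" and VW': "verts W' \<subseteq> verts W" and AW': "arcs W' \<subseteq> arcs W"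
      using sub unfolding subgraph_def by auto
    define G where "G = \<lparr>verts = verts H1 \<times> h ` verts W',
       arcs = {((x,r),(y,s)). (x,y)\<in>arcs H1 \<and> (\<exists>a b. (a,b)\<in>arcs W' \<and> r = h a \<and> s = h b)}\<rparr>"
    have "graph G"
      unfolding graph_def
    proof (intro conjI)
      show "finite (verts G)" using finV1 gW' unfolding G_def graph_def by simp
      show "arcs G \<subseteq> verts G \<times> verts G"
      proof
        fix e assume "e \<in> arcs G"
        then obtain x r y s a b where e: "e = ((x,r),(y,s))" "(x,y)\<in>arcs H1" "(a,b)\<in>arcs W'" "r = h a" "s = h b"
          unfolding G_def by auto
        have "x \<in> verts H1" "y \<in> verts H1" using graph_arcsD[OF gH1 e(2)] by auto
        moreover have "a \<in> verts W'" "b \<in> verts W'" using graph_arcsD[OF gW' e(3)] by auto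
        ultimately show "e \<in> verts G \<times> verts G" using e unfolding G_def by auto
      qed
      show "sym (arcs G)" unfolding sym_def
      proof (intro allI impI)
        fix e1 e2 assume "(e1, e2) \<in> arcs G"
        then obtain x r y s a b where e: "e1 = (x,r)" "e2 = (y,s)" "(x,y)\<in>arcs H1" "(a,b)\<in>arcs W'" "r = h a" "s = h b"
          unfolding G_def by auto
        have "(y,x) \<in> arcs H1" "(b,a) \<in> arcs W'" using graph_symD[OF gH1 e(3)] graph_symD[OF gW' e(4)] by auto
        thus "(e2, e1) \<in> arcs G" using e unfolding G_def by auto
      qed
    qed
    moreover have "verts G \<subseteq> verts H" using VW' img unfolding G_def by auto
    moreover have "arcs G \<subseteq> arcs H"
    proof
      fix e assume "e \<in> arcs G"
      then obtain x r y s a b where e: "e = ((x,r),(y,s))" "(x,y)\<in>arcs H1" "(a,b)\<in>arcs W'" "r = h a" "s = h b"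
        unfolding G_def by auto
      have "(a,b) \<in> arcs W" using AW' e(3) by auto
      hence "(r,s) \<in> arcs R" using arcW e by auto
      thus "e \<in> arcs H" using e by simp
    qed
    ultimately have subG: "subgraph G H" unfolding subgraph_def by blast
    define \<phi> where "\<phi> z = (fst z, h (f (hi (snd z))))" for z :: "'a \<times> 'b"
    have "hom H G \<phi>"
      unfolding hom_def
    proof (intro conjI ballI allI impI)
      fix z assume "z \<in> verts H"
      hence "snd z \<in> verts R" "fst z \<in> verts H1" by (auto simp: mem_Times_iff)
      hence "hi (snd z) \<in> verts W" "fst z \<in> verts H1" using hi1 by auto
      hence "f (hi (snd z)) \<in> verts W'" "fst z \<in> verts H1" using hf unfolding hom_def by auto
      thus "\<phi> z \<in> verts G" unfolding G_def \<phi>_def by auto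
    next
      fix z1 z2 assume "(z1,z2) \<in> arcs H"
      then obtain x r y s where z: "z1 = (x,r)" "z2 = (y,s)" "(x,y) \<in> arcs H1" "(r,s) \<in> arcs R"
        by (cases z1, cases z2) auto
      have "(hi r, hi s) \<in> arcs W" using arc_hi z(4) .
      hence "(f (hi r), f (hi s)) \<in> arcs W'" using hf unfolding hom_def by auto
      thus "(\<phi> z1, \<phi> z2) \<in> arcs G" unfolding G_def \<phi>_def using z by auto
    qed
    hence GH: "G = H" using cH subG unfolding core_def by blast
    have VGH: "verts G = verts H" using GH by simp
    have "verts W \<subseteq> verts W'"
    proof
      fix a assume a: "a \<in> verts W"
      obtain x where x: "x \<in> verts H1" using two_verts by blast
      have "(x, h a) \<in> verts H" using x hV[OF a] by simp
      hence "(x, h a) \<in> verts G" using VGH by simp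
      then obtain a' where a': "a' \<in> verts W'" "h a = h a'" unfolding G_def by auto
      have "a' \<in> verts W" using a' VW' by auto
      hence "a' = a" using a' a inj unfolding inj_on_def by metis
      thus "a \<in> verts W'" using a' by simp
    qed
    hence vEq: "verts W' = verts W" using VW' by auto
    have aEq: "arcs W' = arcs W"
    proof
      show "arcs W' \<subseteq> arcs W" by (fact AW')
      show "arcs W \<subseteq> arcs W'"
      proof
        fix e assume eW: "e \<in> arcs W"
        then obtain a b where e: "e = (a,b)" by (cases e)
        have ab: "a \<in> verts W" "b \<in> verts W" "(h a, h b) \<in> arcs R" using arcW eW e by auto
        obtain x y where xy: "(x,y) \<in> arcs H1" using E1_ne by auto
        have "((x, h a),(y, h b)) \<in> arcs H" using xy ab by simp
        hence "((x, h a),(y, h b)) \<in> arcs G" using GH by simp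
        then obtain a' b' where a'b': "(a',b') \<in> arcs W'" "h a = h a'" "h b = h b'"
          unfolding G_def by auto
        have "a' \<in> verts W" "b' \<in> verts W" using graph_arcsD[OF gW' a'b'(1)] VW' by auto
        hence "a' = a" "b' = b" using a'b' ab inj unfolding inj_on_def by metis+
        thus "e \<in> arcs W'" using a'b' e by simp
      qed
    qed
    have "W' = W" using vEq aEq by (simp add: graph.equality)
    thus False using ne by simp
  qed
  show ?thesis using gW bij arcW conW coreW incW by blast
qed

end

context L17 begin

lemma arcsH_fst: "(p,q) \<in> arcs H \<Longrightarrow> (fst p, fst q) \<in> arcs H1"
  by (cases p, cases q) simp

lemma gpow_arc_verts:
  assumes "(xs, ys) \<in> arcs (gpow H1 n)"
  shows "xs \<in> verts (gpow H1 n)" "ys \<in> verts (gpow H1 n)"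
proof -
  have l: "length xs = n" "length ys = n" "\<forall>i<n. (xs ! i, ys ! i) \<in> arcs H1" using assms by auto
  have "set xs \<subseteq> verts H1"
  proof
    fix x assume "x \<in> set xs"
    then obtain i where "i < n" "x = xs ! i" using l by (auto simp: in_set_conv_nth)
    thus "x \<in> verts H1" using l graph_arcsD[OF gH1] by blast
  qed
  moreover have "set ys \<subseteq> verts H1"
  proof
    fix x assume "x \<in> set ys"
    then obtain i where "i < n" "x = ys ! i" using l by (auto simp: in_set_conv_nth)
    thus "x \<in> verts H1" using l graph_arcsD[OF gH1] by blast
  qed
  ultimately show "xs \<in> verts (gpow H1 n)" "ys \<in> verts (gpow H1 n)" using l by auto
qed

lemma key:
  assumes n2: "n \<ge> 2" and hg: "hom (dprod (gpow H1 n) R) H1 g"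
    and xy: "(xs, ys) \<in> arcs (gpow H1 n)"
  shows "(g (xs, w), g (ys, w)) \<in> arcs H1"
proof -
  define d where "d x r = g (replicate n x, r)" for x r
  define e where "e z = (d (fst z) (snd z), snd z)" for z
  have gV: "g (xs', r) \<in> verts H1" if "xs' \<in> verts (gpow H1 n)" "r \<in> verts R" for xs' r
    using hg that unfolding hom_def by simp
  have gA: "(g (xs', r), g (ys', s)) \<in> arcs H1"
    if "(xs', ys') \<in> arcs (gpow H1 n)" "(r,s) \<in> arcs R" for xs' ys' r s
    using hg that unfolding hom_def by simp
  have dV: "d x r \<in> verts H1" if "x \<in> verts H1" "r \<in> verts R" for x r
    unfolding d_def using gV[of "replicate n x" r] that by (auto simp: set_replicate_conv_if)
  have dA: "(d x r, d y s) \<in> arcs H1" if "(x,y) \<in> arcs H1" "(r,s) \<in> arcs R" for x y r s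
    unfolding d_def using gA that by simp
  have eV: "\<forall>z\<in>verts H. e z \<in> verts H" using dV by (auto simp: e_def)
  have eA: "\<forall>z1 z2. (z1,z2)\<in>arcs H \<longrightarrow> (e z1, e z2) \<in> arcs H"
  proof (intro allI impI)
    fix z1 z2 assume "(z1,z2) \<in> arcs H"
    thus "(e z1, e z2) \<in> arcs H" using dA by (cases z1, cases z2) (simp add: e_def)
  qed
  have surj: "e ` verts H = verts H" using core_surj[OF cH eV eA] .
  have finH: "finite (verts H)" using gH graph_def by blast
  have inj: "inj_on e (verts H)" using finite_surj_inj[OF finH] surj by simp
  have onto: "(\<lambda>(x,y). (e x, e y)) ` arcs H = arcs H" using core_arcs_onto[OF cH eV eA] .
  define ei where "ei = the_inv_into (verts H) e"
  have ei1: "ei z \<in> verts H" "e (ei z) = z" if "z \<in> verts H" for z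
    using that inj surj unfolding ei_def
    by (auto intro: the_inv_into_into f_the_inv_into_f)
  have ei2: "ei (e z) = z" if "z \<in> verts H" for z
    using that inj unfolding ei_def by (simp add: the_inv_into_f_f)
  have ei_snd: "snd (ei z) = snd z" if "z \<in> verts H" for z
    using ei1[OF that] by (metis e_def snd_conv)
  have ei_arc: "(ei p, ei q) \<in> arcs H" if "(p,q) \<in> arcs H" for p q
  proof -
    have "(p,q) \<in> (\<lambda>(x,y). (e x, e y)) ` arcs H" using onto that by simp
    then obtain a b where ab: "(a,b) \<in> arcs H" "p = e a" "q = e b" by auto
    have "a \<in> verts H" "b \<in> verts H" using graph_arcsD[OF gH ab(1)] by auto
    thus ?thesis using ab ei2 by simp
  qed
  have KN: "\<exists>y. (x,y) \<in> arcs H1 \<and> z = d y r'"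
    if rr: "(r,r') \<in> arcs R" and x: "x \<in> verts H1" and dz: "(d x r, z) \<in> arcs H1" for r r' x z
  proof -
    have "((d x r, r),(z, r')) \<in> arcs H" using rr dz by simp
    hence "((d x r, r),(z, r')) \<in> (\<lambda>(x,y). (e x, e y)) ` arcs H" using onto by simp
    then obtain a b where ab: "(a,b) \<in> arcs H" "e a = (d x r, r)" "e b = (z, r')" by auto
    have aV: "a \<in> verts H" "b \<in> verts H" using graph_arcsD[OF gH ab(1)] by auto
    have rV: "r \<in> verts R" using graph_arcsD[OF gR rr] by auto
    have "e (x, r) = (d x r, r)" by (simp add: e_def)
    moreover have "(x, r) \<in> verts H" using x rV by simp
    ultimately have "a = (x, r)" using inj aV(1) ab(2) unfolding inj_on_def by metis
    moreover obtain b1 b2 where b: "b = (b1, b2)" by (cases b)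
    ultimately have "(x, b1) \<in> arcs H1" "z = d b1 r'" using ab by (auto simp: e_def)
    thus ?thesis by blast
  qed
  have dist2: "d x r = d x r''" if a123: "(r,m) \<in> arcs R" "(m,r'') \<in> arcs R" "x \<in> verts H1" for r m r'' x
  proof (rule fold_H1)
    show "d x r \<in> verts H1" using dV that graph_arcsD[OF gR] by blast
    show "d x r'' \<in> verts H1" using dV that graph_arcsD[OF gR] by blast
    have s1: "(m, r) \<in> arcs R" "(r'', m) \<in> arcs R" using symR that by auto
    show "\<forall>z. (d x r, z) \<in> arcs H1 \<longleftrightarrow> (d x r'', z) \<in> arcs H1"
    proof (intro allI iffI)
      fix z assume "(d x r, z) \<in> arcs H1"
      then obtain y where "(x,y) \<in> arcs H1" "z = d y m" using KN a123 by blast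
      thus "(d x r'', z) \<in> arcs H1" using dA s1 by simp
    next
      fix z assume "(d x r'', z) \<in> arcs H1"
      then obtain y where "(x,y) \<in> arcs H1" "z = d y m" using KN s1 a123 by blast
      thus "(d x r, z) \<in> arcs H1" using dA a123 by simp
    qed
  qed
  have dE2: "(w,r) \<in> E2\<^sup>* \<Longrightarrow> \<forall>x\<in>verts H1. d x r = d x w" for r
  proof (induction rule: rtrancl_induct)
    case base thus ?case by simp
  next
    case (step y z)
    then obtain m where "(y,m) \<in> arcs R" "(m,z) \<in> arcs R" by blast
    thus ?case using step.IH dist2 by metis
  qed
  obtain w' where ww: "(w,w') \<in> arcs R" "(w,w') \<in> E2\<^sup>*" using nonbip by blast
  have dadj: "(d x w, d y w) \<in> arcs H1" if "(x,y) \<in> arcs H1" for x y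
  proof -
    have "(d x w, d y w') \<in> arcs H1" using dA that ww by simp
    moreover have "y \<in> verts H1" using graph_arcsD[OF gH1 that] by simp
    ultimately show ?thesis using dE2[OF ww(2)] by simp
  qed
  \<comment> \<open>the idempotent polymorphism\<close>
  define G where "G z = fst (ei (g z, snd z))" for z
  have pV: "(g (xs', r), r) \<in> verts H" if "xs' \<in> verts (gpow H1 n)" "r \<in> verts R" for xs' r
    using gV that by simp
  have GV: "G (xs', r) \<in> verts H1" if "xs' \<in> verts (gpow H1 n)" "r \<in> verts R" for xs' r
    using ei1(1)[OF pV[OF that]] unfolding G_def by (auto simp: mem_Times_iff)
  have GA: "(G (xs', r), G (ys', s)) \<in> arcs H1"
    if "(xs', ys') \<in> arcs (gpow H1 n)" "(r,s) \<in> arcs R" for xs' ys' r s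
  proof -
    have "((g (xs', r), r), (g (ys', s), s)) \<in> arcs H" using gA that by simp
    from arcsH_fst[OF ei_arc[OF this]] show ?thesis unfolding G_def by simp
  qed
  have Gid: "G (replicate n x, r) = x" if "x \<in> verts H1" "r \<in> verts R" for x r
  proof -
    have "(g (replicate n x, r), r) = e (x, r)" by (simp add: e_def d_def)
    thus ?thesis unfolding G_def using ei2 that by simp
  qed
  obtain W :: "nat graph" and h where gW: "graph W" and bij: "bij_betw h (verts W) (verts R)"
    and arcW: "\<forall>a b. (a,b)\<in>arcs W \<longleftrightarrow> a\<in>verts W \<and> b\<in>verts W \<and> (h a, h b)\<in>arcs R"
    and cW: "connected_graph W" "core W" "incomparable W H1"
    using W_exists by blast
  have hV: "h t \<in> verts R" if "t \<in> verts W" for t using bij that bij_betw_apply by fastforce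
  define GW where "GW z = G (fst z, h (snd z))" for z
  have homGW: "hom (dprod (gpow H1 n) W) H1 GW"
    unfolding hom_def
  proof (intro conjI ballI allI impI)
    fix z assume "z \<in> verts (dprod (gpow H1 n) W)"
    then obtain xs' t where "z = (xs', t)" "xs' \<in> verts (gpow H1 n)" "t \<in> verts W"
      by (cases z) (simp only: verts_dprod mem_Times_iff, auto)
    thus "GW z \<in> verts H1" using GV hV unfolding GW_def by simp
  next
    fix z1 z2 assume za: "(z1, z2) \<in> arcs (dprod (gpow H1 n) W)"
    obtain xs' t ys' t' where z: "z1 = (xs', t)" "z2 = (ys', t')" by (cases z1, cases z2) blast
    have "(xs', ys') \<in> arcs (gpow H1 n)" "(t,t') \<in> arcs W" using za unfolding z by simp_all
    thus "(GW z1, GW z2) \<in> arcs H1" using GA arcW z unfolding GW_def by simp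
  qed
  have idGW: "\<forall>x\<in>verts H1. \<forall>t\<in>verts W. GW (replicate n x, t) = x"
    using Gid hV unfolding GW_def by simp
  obtain i where i: "i < n" and proj: "\<forall>v\<in>verts (dprod (gpow H1 n) W). GW v = fst v ! i"
    using tp n2 cW homGW idGW unfolding truly_projective_def by blast
  have Gproj: "G (xs', r) = xs' ! i" if tt: "xs' \<in> verts (gpow H1 n)" "r \<in> verts R" for xs' r
  proof -
    obtain t where t: "t \<in> verts W" "r = h t" using bij tt(2) unfolding bij_betw_def by auto
    have "GW (xs', t) = xs' ! i" using proj tt(1) t(1) by simp
    thus ?thesis using t unfolding GW_def by simp
  qed
  have gform: "g (xs', r) = d (xs' ! i) r" if "xs' \<in> verts (gpow H1 n)" "r \<in> verts R" for xs' r
  proof -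
    have p: "(g (xs', r), r) \<in> verts H" using pV that .
    have "ei (g (xs', r), r) = (xs' ! i, r)"
      using Gproj[OF that] ei_snd[OF p] unfolding G_def by (metis prod.collapse snd_conv)
    hence "e (xs' ! i, r) = (g (xs', r), r)" using ei1(2)[OF p] by simp
    thus ?thesis by (simp add: e_def)
  qed
  have xsV: "xs \<in> verts (gpow H1 n)" "ys \<in> verts (gpow H1 n)" using gpow_arc_verts[OF xy] by auto
  have "(xs ! i, ys ! i) \<in> arcs H1" using xy i by simp
  thus ?thesis using gform[OF xsV(1) wR] gform[OF xsV(2) wR] dadj by simp
qed

end

theorem lemma17:
  fixes H1 :: "'a graph" and R :: "'b graph" and w :: 'b
  assumes "graph H1" and "graph R"
    and "connected_graph (dprod H1 R)" and "core (dprod H1 R)"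
    and "\<not> trivial_graph (dprod H1 R)"
    and "truly_projective H1"
    and "\<not> iso R K1star"
    and "w \<in> verts R"
  shows "\<exists>(F :: nat graph) u v. graph F \<and> u \<in> verts F \<and> v \<in> verts F \<and>
    (\<forall>x y. (x, y) \<in> arcs H1 \<longrightarrow>
        (\<exists>f. hom F (dprod H1 R) f \<and> f u = (x, w) \<and> f v = (y, w))) \<and>
    (\<forall>f. hom F (dprod H1 R) f \<longrightarrow> (fst (f u), fst (f v)) \<in> arcs H1)"
proof -
  interpret L: L17 H1 R w using assms by unfold_locales auto
  have finE: "finite (arcs H1)"
    using assms(1) unfolding graph_def by (meson finite_SigmaI finite_subset)
  obtain xs0 where xs0: "set xs0 = arcs H1" using finite_list[OF finE] by blast
  define L where "L = xs0 @ xs0"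
  define n where "n = length L"
  have "xs0 \<noteq> []" using xs0 L.E1_ne by auto
  hence n2: "n \<ge> 2" unfolding n_def L_def by (cases xs0) auto
  have setL: "set L = arcs H1" using xs0 by (simp add: L_def)
  define us where "us = map fst L"
  define vs where "vs = map snd L"
  have Lj: "L ! j \<in> arcs H1" if "j < n" for j using setL that unfolding n_def by (metis nth_mem)
  have uvA: "(us, vs) \<in> arcs (gpow H1 n)"
    using Lj unfolding us_def vs_def n_def by (auto simp: prod.collapse)
  have uvV: "us \<in> verts (gpow H1 n)" "vs \<in> verts (gpow H1 n)" using L.gpow_arc_verts[OF uvA] by auto
  define F0 where "F0 = dprod (gpow H1 n) R"
  have gpowG: "graph (gpow H1 n)"
  proof -
    have fin: "finite {xs. set xs \<subseteq> verts H1 \<and> length xs = n}"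
      using L.finV1 by (rule finite_lists_length_eq)
    show ?thesis unfolding graph_def
    proof (intro conjI)
      show "finite (verts (gpow H1 n))" using fin by (simp add: gpow_def conj_commute)
      show "arcs (gpow H1 n) \<subseteq> verts (gpow H1 n) \<times> verts (gpow H1 n)"
      proof
        fix e assume "e \<in> arcs (gpow H1 n)"
        then obtain a b where e: "e = (a,b)" "(a,b) \<in> arcs (gpow H1 n)" by (cases e) auto
        show "e \<in> verts (gpow H1 n) \<times> verts (gpow H1 n)"
          using L.gpow_arc_verts[OF e(2)] e(1) by blast
      qed
      show "sym (arcs (gpow H1 n))" unfolding sym_def using graph_symD[OF assms(1)] by auto
    qed
  qed
  have gF0: "graph F0" unfolding F0_def using graph_dprod[OF gpowG assms(2)] .
  obtain F :: "nat graph" and h where gF: "graph F" and bij: "bij_betw h (verts F) (verts F0)"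
    and arcF: "\<forall>a b. (a,b)\<in>arcs F \<longleftrightarrow> a\<in>verts F \<and> b\<in>verts F \<and> (h a, h b)\<in>arcs F0"
    using encode[OF gF0] by blast
  define hi where "hi = the_inv_into (verts F) h"
  have inj: "inj_on h (verts F)" and img: "h ` verts F = verts F0" using bij unfolding bij_betw_def by auto
  have hi1: "hi z \<in> verts F" "h (hi z) = z" if "z \<in> verts F0" for z
    using that inj img unfolding hi_def
    by (auto intro: the_inv_into_into f_the_inv_into_f)
  have hV: "h a \<in> verts F0" if "a \<in> verts F" for a using that img by auto
  define u where "u = hi (us, w)"
  define v where "v = hi (vs, w)"
  have uV: "(us, w) \<in> verts F0" "(vs, w) \<in> verts F0" using uvV assms(8) by (auto simp: F0_def)
  have u: "u \<in> verts F" "h u = (us, w)" using hi1 uV unfolding u_def by auto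
  have v: "v \<in> verts F" "h v = (vs, w)" using hi1 uV unfolding v_def by auto
  have partA: "\<forall>x y. (x, y) \<in> arcs H1 \<longrightarrow>
        (\<exists>f. hom F (dprod H1 R) f \<and> f u = (x, w) \<and> f v = (y, w))"
  proof (intro allI impI)
    fix x y assume xy: "(x,y) \<in> arcs H1"
    obtain j where j: "j < n" "L ! j = (x,y)" using xy setL unfolding n_def by (metis in_set_conv_nth)
    define f where "f k = (fst (h k) ! j, snd (h k))" for k
    have "hom F (dprod H1 R) f"
      unfolding hom_def
    proof (intro conjI ballI allI impI)
      fix k assume "k \<in> verts F"
      hence "h k \<in> verts F0" by (rule hV)
      hence "fst (h k) \<in> verts (gpow H1 n)" "snd (h k) \<in> verts R"
        unfolding F0_def by (auto simp: mem_Times_iff)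
      thus "f k \<in> verts (dprod H1 R)" using j unfolding f_def by (auto simp: mem_Times_iff)
    next
      fix k l assume "(k,l) \<in> arcs F"
      hence "(h k, h l) \<in> arcs F0" using arcF by blast
      then obtain a b c d where hk: "h k = (a,b)" "h l = (c,d)" "(a,c) \<in> arcs (gpow H1 n)" "(b,d) \<in> arcs R"
        unfolding F0_def by (cases "h k", cases "h l") auto
      thus "(f k, f l) \<in> arcs (dprod H1 R)" using j unfolding f_def by simp
    qed
    moreover have "f u = (x, w)" "f v = (y, w)" using u v j unfolding f_def us_def vs_def n_def by auto
    ultimately show "\<exists>f. hom F (dprod H1 R) f \<and> f u = (x, w) \<and> f v = (y, w)" by blast
  qed
  have partB: "\<forall>f. hom F (dprod H1 R) f \<longrightarrow> (fst (f u), fst (f v)) \<in> arcs H1"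
  proof (intro allI impI)
    fix f assume hf: "hom F (dprod H1 R) f"
    define g where "g z = fst (f (hi z))" for z
    have "hom (dprod (gpow H1 n) R) H1 g"
      unfolding hom_def
    proof (intro conjI ballI allI impI)
      fix z assume "z \<in> verts (dprod (gpow H1 n) R)"
      hence "hi z \<in> verts F" using hi1 unfolding F0_def by blast
      hence "f (hi z) \<in> verts (dprod H1 R)" using hf unfolding hom_def by blast
      thus "g z \<in> verts H1" unfolding g_def by (auto simp: mem_Times_iff)
    next
      fix z1 z2 assume za: "(z1, z2) \<in> arcs (dprod (gpow H1 n) R)"
      hence zF: "(z1, z2) \<in> arcs F0" by (simp add: F0_def)
      have zV: "z1 \<in> verts F0" "z2 \<in> verts F0" using graph_arcsD[OF gF0 zF] by auto
      have "(hi z1, hi z2) \<in> arcs F" using arcF hi1[OF zV(1)] hi1[OF zV(2)] zF by simp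
      hence "(f (hi z1), f (hi z2)) \<in> arcs (dprod H1 R)" using hf unfolding hom_def by blast
      thus "(g z1, g z2) \<in> arcs H1" unfolding g_def by (rule L.arcsH_fst)
    qed
    from L.key[OF n2 this uvA] show "(fst (f u), fst (f v)) \<in> arcs H1"
      unfolding g_def u_def v_def .
  qed
  show ?thesis using gF u(1) v(1) partA partB by blast
qed

end
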